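(* Let $A$ be a finite alphabet with $k=|A|$, let $L\subseteq A^*$ be $n$-PT, and let $m=f_k(n)$. For every $u\in L$ there is a D-product $P_u$ of length $\ell\leq mk+m+k$ such that $u\in P_u\subseteq L$.
   Context: A D-product is a regular expression $E_1E_2\cdots E_\ell$ where each $E_i$ is either $B^*$ for a subalphabet $B\subseteq A$ or a single letter $a\in A$; $\ell$ is its length, and it also denotes its language. $u\sim_n v$ iff $u,v$ have the same (scattered) subwords of length at most $n$; $L$ is $n$-PT if it is a union of $\sim_n$-classes. The functions $f_k$ ($k\geq1$) are defined by $f_1(n)=n$ and $f_{k+1}(n)=\max_{0\leq m\leq n}\bigl(m f_k(n+1-m)+m+f_k(n-m)\bigr)$. *)

theory Defs
  imports Main "HOL-Library.Sublist"
begin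

definition subwords_upto :: "nat \<Rightarrow> 'a list \<Rightarrow> 'a list set" where
  "subwords_upto n u = {v. subseq v u \<and> length v \<le> n}"

definition sim :: "nat \<Rightarrow> 'a list \<Rightarrow> 'a list \<Rightarrow> bool" where
  "sim n u v \<longleftrightarrow> subwords_upto n u = subwords_upto n v"

definition n_PT :: "'a set \<Rightarrow> nat \<Rightarrow> 'a list set \<Rightarrow> bool" where
  "n_PT A n L \<longleftrightarrow> L \<subseteq> lists A \<and>
     (\<forall>u\<in>lists A. \<forall>v\<in>lists A. sim n u v \<longrightarrow> (u \<in> L \<longleftrightarrow> v \<in> L))"

text \<open>Factors of a D-product: B* for a subalphabet B, or a single letter.\<close>
datatype 'a dfactor = Star "'a set" | Letter 'a

definition dproduct :: "'a set \<Rightarrow> 'a dfactor list \<Rightarrow> bool" where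
  "dproduct A P \<longleftrightarrow> (\<forall>E\<in>set P. case E of Star B \<Rightarrow> B \<subseteq> A | Letter a \<Rightarrow> a \<in> A)"

primrec dlang :: "'a dfactor list \<Rightarrow> 'a list set" where
  "dlang [] = {[]}"
| "dlang (E # P) = (case E of
      Star B \<Rightarrow> {x @ y | x y. x \<in> lists B \<and> y \<in> dlang P}
    | Letter a \<Rightarrow> {a # y | y. y \<in> dlang P})"

text \<open>fseq k = f_k for k \<ge> 1 (fseq 0 is a junk value, never used).\<close>
primrec fseq :: "nat \<Rightarrow> nat \<Rightarrow> nat" where
  "fseq 0 n = n"
| "fseq (Suc k) n = (if k = 0 then n
     else Max ((\<lambda>m. m * fseq k (n + 1 - m) + m + fseq k (n - m)) ` {0..n}))"

end

theory Submission
  imports Defs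
begin

definition emb :: "nat \<Rightarrow> 'a list \<Rightarrow> 'a list \<Rightarrow> bool" where
  "emb N x y \<longleftrightarrow> (\<forall>s. length s \<le> N \<longrightarrow> subseq s x \<longrightarrow> subseq s y)"

definition univ :: "'a set \<Rightarrow> nat \<Rightarrow> 'a list \<Rightarrow> bool" where
  "univ B d x \<longleftrightarrow> (\<forall>s\<in>lists B. length s \<le> d \<longrightarrow> subseq s x)"

lemma sim_emb: "sim N x y \<longleftrightarrow> emb N x y \<and> emb N y x"
  unfolding sim_def subwords_upto_def emb_def by blast

lemma emb_mono: "emb q x y \<Longrightarrow> N \<le> q \<Longrightarrow> emb N x y"
  unfolding emb_def by auto

lemma sim_mono: "sim q x y \<Longrightarrow> N \<le> q \<Longrightarrow> sim N x y"
  using sim_emb emb_mono by metis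

lemma sim_refl: "sim N x x"
  unfolding sim_def by simp

lemma sim_zero: "sim 0 x y"
  unfolding sim_emb emb_def by auto

lemma sim_set: assumes "sim n x y" "1 \<le> n" shows "set x = set y"
proof -
  have "c \<in> set x \<longleftrightarrow> c \<in> set y" for c
  proof -
    have l: "length [c] \<le> n" using assms(2) by simp
    show ?thesis using assms(1) l unfolding sim_emb emb_def subseq_singleton_left[symmetric] by blast
  qed
  then show ?thesis by blast
qed

lemma univ_zero: "univ B 0 x"
  unfolding univ_def by auto

lemma univ_mono: "univ B d x \<Longrightarrow> d' \<le> d \<Longrightarrow> univ B d' x"
  unfolding univ_def by auto

lemma univ_cons:
  assumes "B \<subseteq> set y" "univ B d x"
  shows "univ B (Suc d) (y @ x)"
  unfolding univ_def
proof (intro ballI impI)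
  fix s assume s: "s \<in> lists B" "length s \<le> Suc d"
  show "subseq s (y @ x)"
  proof (cases s)
    case Nil then show ?thesis by simp
  next
    case (Cons c s')
    then have "subseq [c] y" using s assms(1) subseq_singleton_left by fastforce
    moreover have "subseq s' x" using assms(2) s Cons unfolding univ_def by auto
    ultimately show ?thesis using Cons list_emb_append_mono by fastforce
  qed
qed

lemma arcX:
  assumes "subseq t (w @ [a])" "length t \<le> p" "emb p w w'"
  shows "subseq t (w' @ [a])"
proof -
  obtain t1 t2 where t: "t = t1 @ t2" "subseq t1 w" "subseq t2 [a]"
    using assms(1) by (auto elim: subseq_appendE)
  have "subseq t1 w'" using assms t unfolding emb_def by auto
  then show ?thesis using t list_emb_append_mono by blast
qed

lemma emb_step:
  assumes "set (w @ a # Z) \<subseteq> B" "B \<subseteq> insert a (set w')" "emb p w w'"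
    "emb (N - 1) Z Z'" "univ B (N - p) Z'"
  shows "emb N (w @ a # Z) (w' @ a # Z')"
  unfolding emb_def
proof (intro allI impI)
  fix s assume sl: "length s \<le> N" and ss: "subseq s (w @ a # Z)"
  have "set s \<subseteq> set (w @ a # Z)"
  proof
    fix c assume "c \<in> set s"
    from list_emb_set[OF ss this] show "c \<in> set (w @ a # Z)" by auto
  qed
  then have sB: "set s \<subseteq> B" using assms(1) by auto
  have eq: "w' @ a # Z' = (w' @ [a]) @ Z'" by simp
  have "w @ a # Z = (w @ [a]) @ Z" by simp
  then obtain t z where tz: "s = t @ z" "subseq t (w @ [a])" "subseq z Z"
    using ss subseq_appendE[of s "w @ [a]" Z] by metis
  show "subseq s (w' @ a # Z')"
  proof (cases "t = []")
    case True
    show ?thesis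
    proof (cases s)
      case Nil then show ?thesis by simp
    next
      case (Cons c s')
      have "c \<in> B" using sB Cons by auto
      then have "c \<in> set (w' @ [a])" using assms(2) by auto
      then have c1: "subseq [c] (w' @ [a])" by (simp only: subseq_singleton_left)
      have "subseq s' Z" using tz True Cons subseq_Cons' by auto
      then have c2: "subseq s' Z'" using assms(4) sl Cons unfolding emb_def by auto
      have "subseq ([c] @ s') ((w' @ [a]) @ Z')" by (rule list_emb_append_mono[OF c1 c2])
      then show ?thesis using Cons by simp
    qed
  next
    case False
    show ?thesis
    proof (cases "length t \<le> p")
      case True
      have c1: "subseq t (w' @ [a])" by (rule arcX[OF tz(2) True assms(3)])
      have "length z \<le> N - 1" using sl tz False by (cases t) auto
      then have c2: "subseq z Z'" using assms(4) tz unfolding emb_def by auto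
      have "subseq (t @ z) ((w' @ [a]) @ Z')" by (rule list_emb_append_mono[OF c1 c2])
      then show ?thesis using tz by simp
    next
      case ge: False
      have "subseq (take p t) t" by (rule prefix_imp_subseq) (simp add: take_is_prefix)
      then have "subseq (take p t) (w @ [a])" using tz(2) by (rule subseq_order.order_trans)
      then have "subseq (take p t) (w' @ [a])" by (rule arcX[where p=p]) (simp_all add: assms(3))
      moreover have "drop p t @ z \<in> lists B" using sB tz
        by (auto dest: in_set_dropD)
      moreover have "length (drop p t @ z) \<le> N - p" using sl tz ge by auto
      ultimately have "subseq (take p t) (w' @ [a])" "subseq (drop p t @ z) Z'"
        using assms(5) unfolding univ_def by auto
      then have "subseq (take p t @ (drop p t @ z)) ((w' @ [a]) @ Z')"
        by (rule list_emb_append_mono)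
      then show ?thesis using tz(1) by (simp only: append_take_drop_id append_assoc[symmetric] eq)
    qed
  qed
qed

lemma dlang_append: "dlang (P @ Q) = {x @ y | x y. x \<in> dlang P \<and> y \<in> dlang Q}"
proof (induction P)
  case Nil then show ?case by simp
next
  case (Cons E P)
  then show ?case
  proof (cases E)
    case (Star B)
    have dE: "dlang (E # P) = {x @ y | x y. x \<in> lists B \<and> y \<in> dlang P}" using Star by simp
    have dEQ: "dlang ((E # P) @ Q) = {x @ y | x y. x \<in> lists B \<and> y \<in> dlang (P @ Q)}" using Star by simp
    show ?thesis
    proof (rule set_eqI, rule iffI)
      fix z assume "z \<in> dlang ((E # P) @ Q)"
      then obtain x y where xy: "z = x @ y" "x \<in> lists B" "y \<in> dlang (P @ Q)" unfolding dEQ by blast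
      then obtain y1 y2 where y: "y = y1 @ y2" "y1 \<in> dlang P" "y2 \<in> dlang Q" using Cons.IH by blast
      have "x @ y1 \<in> dlang (E # P)" unfolding dE using xy y by blast
      moreover have "z = (x @ y1) @ y2" using xy y by simp
      ultimately show "z \<in> {x @ y |x y. x \<in> dlang (E # P) \<and> y \<in> dlang Q}" using y by blast
    next
      fix z assume "z \<in> {x @ y |x y. x \<in> dlang (E # P) \<and> y \<in> dlang Q}"
      then obtain x' y2 where xy: "z = x' @ y2" "x' \<in> dlang (E # P)" "y2 \<in> dlang Q" by blast
      then obtain x y1 where x: "x' = x @ y1" "x \<in> lists B" "y1 \<in> dlang P" unfolding dE by blast
      have "y1 @ y2 \<in> dlang (P @ Q)" using Cons.IH x xy by blast
      moreover have "z = x @ (y1 @ y2)" using xy x by simp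
      ultimately show "z \<in> dlang ((E # P) @ Q)" unfolding dEQ using x by blast
    qed
  next
    case (Letter a)
    show ?thesis
    proof (rule set_eqI, rule iffI)
      fix z assume "z \<in> dlang ((E # P) @ Q)"
      then obtain y where xy: "z = a # y" "y \<in> dlang (P @ Q)" using Letter by auto
      then obtain y1 y2 where y: "y = y1 @ y2" "y1 \<in> dlang P" "y2 \<in> dlang Q" using Cons.IH by blast
      have "a # y1 \<in> dlang (E # P)" using Letter y by simp
      moreover have "z = (a # y1) @ y2" using xy y by simp
      ultimately show "z \<in> {x @ y |x y. x \<in> dlang (E # P) \<and> y \<in> dlang Q}" using y by blast
    next
      fix z assume "z \<in> {x @ y |x y. x \<in> dlang (E # P) \<and> y \<in> dlang Q}"
      then obtain x' y2 where xy: "z = x' @ y2" "x' \<in> dlang (E # P)" "y2 \<in> dlang Q" by blast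
      then obtain y1 where x: "x' = a # y1" "y1 \<in> dlang P" using Letter by auto
      have "y1 @ y2 \<in> dlang (P @ Q)" using Cons.IH x xy by blast
      then show "z \<in> dlang ((E # P) @ Q)" using xy x Letter by simp
    qed
  qed
qed

lemma dlang_letter: "dlang (Letter a # P) = {a # y | y. y \<in> dlang P}"
  by simp

lemma dproduct_append: "dproduct X (P @ Q) \<longleftrightarrow> dproduct X P \<and> dproduct X Q"
  unfolding dproduct_def by auto

lemma dproduct_letter: "dproduct X (Letter a # P) \<longleftrightarrow> a \<in> X \<and> dproduct X P"
  unfolding dproduct_def by auto

lemma dproduct_mono: "dproduct X P \<Longrightarrow> X \<subseteq> Y \<Longrightarrow> dproduct Y P"
  unfolding dproduct_def
proof (intro ballI)
  fix E assume a1: "\<forall>E\<in>set P. case E of Star B \<Rightarrow> B \<subseteq> X | Letter a \<Rightarrow> a \<in> X" and a2: "X \<subseteq> Y"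
    and a3: "E \<in> set P"
  from bspec[OF a1 a3] have "case E of Star B \<Rightarrow> B \<subseteq> X | Letter a \<Rightarrow> a \<in> X" .
  then show "case E of Star B \<Rightarrow> B \<subseteq> Y | Letter a \<Rightarrow> a \<in> Y"
    using a2 by (cases E) auto
qed

lemma dproduct_lists: "dproduct X P \<Longrightarrow> x \<in> dlang P \<Longrightarrow> set x \<subseteq> X"
proof (induction P arbitrary: x)
  case Nil then show ?case by simp
next
  case (Cons E P)
  have dP: "dproduct X P" using Cons.prems unfolding dproduct_def by auto
  show ?case
  proof (cases E)
    case (Star B)
    then have "B \<subseteq> X" using Cons.prems unfolding dproduct_def by auto
    show ?thesis
    proof
      fix c assume "c \<in> set x"
      moreover obtain x1 y where "x = x1 @ y" "x1 \<in> lists B" "y \<in> dlang P"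
        using Cons.prems Star by auto
      moreover have "set y \<subseteq> X" using Cons.IH dP \<open>y \<in> dlang P\<close> by blast
      ultimately show "c \<in> X" using \<open>B \<subseteq> X\<close> by auto
    qed
  next
    case (Letter a)
    then have "a \<in> X" using Cons.prems unfolding dproduct_def by auto
    obtain y where y: "x = a # y" "y \<in> dlang P" using Cons.prems Letter by auto
    have "set y \<subseteq> X" using Cons.IH dP y(2) by blast
    then show ?thesis using y \<open>a \<in> X\<close> by auto
  qed
qed

fun PT :: "('a list \<times> 'a \<times> 'a dfactor list) list \<Rightarrow> 'a dfactor list" where
  "PT [] = []"
| "PT ((w, a, Pw) # T) = Pw @ Letter a # PT T"

fun flatT :: "('a list \<times> 'a \<times> 'a dfactor list) list \<Rightarrow> 'a list" where
  "flatT [] = []"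
| "flatT ((w, a, Pw) # T) = w @ a # flatT T"

fun flat2 :: "('a list \<times> 'a) list \<Rightarrow> 'a list" where
  "flat2 [] = []"
| "flat2 ((w, a) # T) = w @ a # flat2 T"

primrec nlet :: "'a dfactor list \<Rightarrow> nat" where
  "nlet [] = 0"
| "nlet (E # P) = (case E of Letter _ \<Rightarrow> Suc (nlet P) | Star _ \<Rightarrow> nlet P)"

lemma nlet_append: "nlet (P @ Q) = nlet P + nlet Q"
  by (induction P) (auto split: dfactor.splits)

lemma count_PT:
  assumes "\<forall>(w, a, Pw)\<in>set T. length Pw \<le> (c + 1) * nlet Pw + c \<and> nlet Pw \<le> d"
  shows "length (PT T) \<le> (c + 1) * nlet (PT T) \<and> nlet (PT T) \<le> length T * (d + 1)"
  using assms
proof (induction T)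
  case Nil then show ?case by simp
next
  case (Cons x T)
  obtain w a Pw where x: "x = (w, a, Pw)" by (cases x) auto
  have h: "length Pw \<le> (c + 1) * nlet Pw + c" "nlet Pw \<le> d" using Cons.prems x by auto
  have ih: "length (PT T) \<le> (c + 1) * nlet (PT T)" "nlet (PT T) \<le> length T * (d + 1)"
    using Cons by auto
  have L: "length (PT (x # T)) = length Pw + 1 + length (PT T)"
    and N: "nlet (PT (x # T)) = nlet Pw + 1 + nlet (PT T)" by (simp_all add: x nlet_append)
  have "(c + 1) * nlet (PT (x # T)) = (c + 1) * nlet Pw + (c + 1) + (c + 1) * nlet (PT T)"
    unfolding N by (simp add: distrib_left)
  then have g1: "length (PT (x # T)) \<le> (c + 1) * nlet (PT (x # T))" using L h ih by linarith
  have "length (x # T) * (d + 1) = (d + 1) + length T * (d + 1)" by simp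
  then have g2: "nlet (PT (x # T)) \<le> length (x # T) * (d + 1)" using N h ih by linarith
  show ?case using g1 g2 by blast
qed

lemma main_arcs:
  fixes B :: "'a set"
  assumes Q: "v \<in> dlang Q" "\<forall>y\<in>dlang Q. sim q y v" "set v \<subseteq> B" "dproduct B Q"
    and p1: "1 \<le> p"
  shows "\<forall>N. (\<forall>(w, a, Pw)\<in>set T. w \<in> dlang Pw \<and> (\<forall>x\<in>dlang Pw. sim p x w) \<and> dproduct B Pw
               \<and> a \<in> B \<and> set w \<subseteq> B \<and> B \<subseteq> insert a (set w))
       \<longrightarrow> N \<le> q + length T \<longrightarrow> N + 1 \<le> p + length T \<longrightarrow>
       (flatT T @ v \<in> dlang (PT T @ Q) \<and> dproduct B (PT T @ Q) \<and>
        (\<forall>x\<in>dlang (PT T @ Q). sim N x (flatT T @ v) \<and> set x \<subseteq> B \<and> univ B (length T) x))"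
proof (induction T)
  case Nil
  show ?case
  proof (intro allI impI)
    fix N :: nat assume "N \<le> q + length ([] :: ('a list \<times> 'a \<times> 'a dfactor list) list)"
    then have Nq: "N \<le> q" by simp
    show "flatT [] @ v \<in> dlang (PT [] @ Q) \<and> dproduct B (PT [] @ Q) \<and>
        (\<forall>x\<in>dlang (PT [] @ Q). sim N x (flatT [] @ v) \<and> set x \<subseteq> B \<and> univ B (length ([] :: ('a list \<times> 'a \<times> 'a dfactor list) list)) x)"
    proof (intro conjI ballI)
      show "flatT [] @ v \<in> dlang (PT [] @ Q)" using Q by simp
      show "dproduct B (PT [] @ Q)" using Q by simp
      fix x assume x: "x \<in> dlang (PT [] @ Q)"
      then show "sim N x (flatT [] @ v)" using Q(2) Nq sim_mono by fastforce
      show "set x \<subseteq> B" using x Q(4) dproduct_lists by fastforce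
      show "univ B (length ([] :: ('a list \<times> 'a \<times> 'a dfactor list) list)) x" using univ_zero by simp
    qed
  qed
next
  case (Cons t T)
  obtain w a Pw where t: "t = (w, a, Pw)" by (cases t) auto
  show ?case
  proof (intro allI impI)
    fix N :: nat
    assume H: "\<forall>(w, a, Pw)\<in>set (t # T). w \<in> dlang Pw \<and> (\<forall>x\<in>dlang Pw. sim p x w) \<and> dproduct B Pw
               \<and> a \<in> B \<and> set w \<subseteq> B \<and> B \<subseteq> insert a (set w)"
      and N1: "N \<le> q + length (t # T)" and N2: "N + 1 \<le> p + length (t # T)"
    have Ht: "w \<in> dlang Pw" "\<forall>x\<in>dlang Pw. sim p x w" "dproduct B Pw"
               "a \<in> B" "set w \<subseteq> B" "B \<subseteq> insert a (set w)" using H t by auto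
    have HT: "\<forall>(w, a, Pw)\<in>set T. w \<in> dlang Pw \<and> (\<forall>x\<in>dlang Pw. sim p x w) \<and> dproduct B Pw
               \<and> a \<in> B \<and> set w \<subseteq> B \<and> B \<subseteq> insert a (set w)" using H by auto
    have "N - 1 \<le> q + length T" "N - 1 + 1 \<le> p + length T" using N1 N2 p1 by auto
    then have IH: "flatT T @ v \<in> dlang (PT T @ Q)" "dproduct B (PT T @ Q)"
       "\<forall>x\<in>dlang (PT T @ Q). sim (N - 1) x (flatT T @ v) \<and> set x \<subseteq> B \<and> univ B (length T) x"
      using Cons.IH HT by blast+
    define u' where "u' = flatT T @ v"
    define R where "R = PT T @ Q"
    have u'R: "u' \<in> dlang R" using IH u'_def R_def by simp
    have Ru: "\<forall>x\<in>dlang R. sim (N - 1) x u' \<and> set x \<subseteq> B \<and> univ B (length T) x"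
      using IH u'_def R_def by simp
    have eqP: "PT (t # T) @ Q = Pw @ Letter a # R" using t R_def by simp
    have equ: "flatT (t # T) @ v = w @ a # u'" using t u'_def by simp
    have NP: "N - p \<le> length T" using N2 by simp
    have u'B: "set u' \<subseteq> B" "univ B (length T) u'" using Ru u'R by auto
    show "flatT (t # T) @ v \<in> dlang (PT (t # T) @ Q) \<and> dproduct B (PT (t # T) @ Q) \<and>
        (\<forall>x\<in>dlang (PT (t # T) @ Q). sim N x (flatT (t # T) @ v) \<and> set x \<subseteq> B \<and> univ B (length (t # T)) x)"
      unfolding eqP equ
    proof (intro conjI ballI)
      show "w @ a # u' \<in> dlang (Pw @ Letter a # R)"
        using Ht(1) u'R by (auto simp: dlang_append)
      show "dproduct B (Pw @ Letter a # R)"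
        using Ht IH(2) R_def by (simp add: dproduct_append dproduct_letter)
      fix x assume "x \<in> dlang (Pw @ Letter a # R)"
      then obtain x1 x' where x: "x = x1 @ a # x'" "x1 \<in> dlang Pw" "x' \<in> dlang R"
        by (auto simp: dlang_append)
      have s1: "sim p x1 w" using x Ht by auto
      have sx1: "set x1 = set w" using sim_set[OF s1 p1] .
      have x'p: "sim (N - 1) x' u'" "set x' \<subseteq> B" "univ B (length T) x'" using Ru x by auto
      have st1: "set (w @ a # u') \<subseteq> B" using Ht(4,5) u'B(1) by auto
      have st2: "set (x1 @ a # x') \<subseteq> B" using Ht(4,5) x'p(2) sx1 by auto
      have bi1: "B \<subseteq> insert a (set x1)" using Ht(6) sx1 by simp
      have em: "emb p w x1" "emb p x1 w" using s1 by (auto simp: sim_emb)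
      have em2: "emb (N - 1) u' x'" "emb (N - 1) x' u'" using x'p(1) by (auto simp: sim_emb)
      have e1: "emb N (w @ a # u') (x1 @ a # x')"
        by (rule emb_step[OF st1 bi1 em(1) em2(1) univ_mono[OF x'p(3) NP]])
      have e2: "emb N (x1 @ a # x') (w @ a # u')"
        by (rule emb_step[OF st2 Ht(6) em(2) em2(2) univ_mono[OF u'B(2) NP]])
      show "sim N x (w @ a # u')" using e1 e2 x by (simp add: sim_emb)
      show "set x \<subseteq> B" using x x'p Ht sx1 by auto
      have "univ B (Suc (length T)) ((x1 @ [a]) @ x')"
        by (rule univ_cons) (use Ht sx1 x'p in auto)
      then show "univ B (length (t # T)) x" using x by simp
    qed
  qed
qed

lemma min_split:
  "B \<subseteq> set u \<Longrightarrow> B \<noteq> {} \<Longrightarrow> \<exists>w a u2. u = w @ a # u2 \<and> \<not> B \<subseteq> set w \<and> B \<subseteq> insert a (set w)"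
proof (induction u rule: rev_induct)
  case Nil then show ?case by simp
next
  case (snoc c u)
  show ?case
  proof (cases "B \<subseteq> set u")
    case True
    then obtain w a u2 where "u = w @ a # u2" "\<not> B \<subseteq> set w" "B \<subseteq> insert a (set w)"
      using snoc by blast
    then show ?thesis by (intro exI[of _ w] exI[of _ a] exI[of _ "u2 @ [c]"]) simp
  next
    case False
    then show ?thesis using snoc.prems
      by (intro exI[of _ u] exI[of _ c] exI[of _ "[]"]) auto
  qed
qed

lemma decomp:
  assumes "B \<noteq> {}"
  shows "\<forall>u. set u \<subseteq> B \<longrightarrow> (\<exists>T v. length T \<le> n \<and> u = flat2 T @ v \<and>
     (\<forall>(w, a)\<in>set T. a \<in> B \<and> set w \<subseteq> B \<and> a \<notin> set w \<and> B \<subseteq> insert a (set w)) \<and>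
     (length T < n \<longrightarrow> \<not> B \<subseteq> set v))"
proof (induction n)
  case 0
  show ?case
  proof (intro allI impI)
    fix u :: "'a list" assume "set u \<subseteq> B"
    show "\<exists>T v. length T \<le> 0 \<and> u = flat2 T @ v \<and>
     (\<forall>(w, a)\<in>set T. a \<in> B \<and> set w \<subseteq> B \<and> a \<notin> set w \<and> B \<subseteq> insert a (set w)) \<and>
     (length T < 0 \<longrightarrow> \<not> B \<subseteq> set v)"
      by (rule exI[of _ "[]"], rule exI[of _ u]) simp
  qed
next
  case (Suc n)
  show ?case
  proof (intro allI impI)
    fix u :: "'a list" assume uB: "set u \<subseteq> B"
    show "\<exists>T v. length T \<le> Suc n \<and> u = flat2 T @ v \<and>
     (\<forall>(w, a)\<in>set T. a \<in> B \<and> set w \<subseteq> B \<and> a \<notin> set w \<and> B \<subseteq> insert a (set w)) \<and>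
     (length T < Suc n \<longrightarrow> \<not> B \<subseteq> set v)"
    proof (cases "B \<subseteq> set u")
      case False
      show ?thesis by (rule exI[of _ "[]"], rule exI[of _ u]) (simp add: False)
    next
      case True
      then obtain w a u2 where wa: "u = w @ a # u2" "\<not> B \<subseteq> set w" "B \<subseteq> insert a (set w)"
        using min_split[OF True assms] by blast
      have p4: "set u2 \<subseteq> B" "set w \<subseteq> B" using wa(1) uB by auto
      have p3: "a \<notin> set w" using wa(2,3) insert_absorb by metis
      have p1: "a \<in> B" using wa(2,3) by blast
      note props = p1 p4(2) p3 p4(1)
      obtain T v where Tv: "length T \<le> n" "u2 = flat2 T @ v"
        "\<forall>(w, a)\<in>set T. a \<in> B \<and> set w \<subseteq> B \<and> a \<notin> set w \<and> B \<subseteq> insert a (set w)"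
        "length T < n \<longrightarrow> \<not> B \<subseteq> set v"
        using Suc.IH props(4) by blast
      show ?thesis
      proof (rule exI[of _ "(w, a) # T"], rule exI[of _ v], intro conjI)
        show "length ((w, a) # T) \<le> Suc n" using Tv(1) by simp
        show "u = flat2 ((w, a) # T) @ v" using Tv(2) wa(1) by simp
        show "\<forall>(w, a)\<in>set ((w, a) # T). a \<in> B \<and> set w \<subseteq> B \<and> a \<notin> set w \<and> B \<subseteq> insert a (set w)"
          using Tv(3) props wa(3) by (simp only: list.set(1) list.set(2) ball_simps(7) split_conv) blast
        show "length ((w, a) # T) < Suc n \<longrightarrow> \<not> B \<subseteq> set v" using Tv(4) by simp
      qed
    qed
  qed
qed

lemma lift:
  "(\<forall>(w, a)\<in>set T0. Pr w a \<and> (\<exists>P. R w P)) \<Longrightarrow>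
   \<exists>T. flatT T = flat2 T0 \<and> length T = length T0 \<and> (\<forall>(w, a, Pw)\<in>set T. Pr w a \<and> R w Pw)"
proof (induction T0)
  case Nil
  show ?case by (rule exI[of _ "[]"]) simp
next
  case (Cons x T0)
  obtain w a where x: "x = (w, a)" by (cases x) auto
  obtain P where "Pr w a" "R w P" using Cons.prems x by auto
  moreover obtain T where "flatT T = flat2 T0" "length T = length T0" "\<forall>(w, a, Pw)\<in>set T. Pr w a \<and> R w Pw"
    using Cons by auto
  ultimately show ?case by (intro exI[of _ "(w, a, P) # T"]) (auto simp: x)
qed

definition F :: "nat \<Rightarrow> nat \<Rightarrow> nat" where
  "F j n = (if j = 0 then 0 else fseq j n)"

lemma F_step:
  assumes "r \<le> n"
  shows "r * F j (n + 1 - r) + r + F j (n - r) \<le> F (Suc j) n"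
proof (cases "j = 0")
  case True then show ?thesis using assms by (simp add: F_def)
next
  case False
  have "r * fseq j (n + 1 - r) + r + fseq j (n - r)
        \<in> (\<lambda>m. m * fseq j (n + 1 - m) + m + fseq j (n - m)) ` {0..n}" using assms by auto
  then have "r * fseq j (n + 1 - r) + r + fseq j (n - r)
        \<le> Max ((\<lambda>m. m * fseq j (n + 1 - m) + m + fseq j (n - m)) ` {0..n})"
    by (intro Max_ge) auto
  then show ?thesis using False by (simp add: F_def)
qed

lemma mainP:
  "\<forall>u n. card (set u) \<le> j \<longrightarrow> (\<exists>P. dproduct (set u) P \<and> u \<in> dlang P \<and> (\<forall>x\<in>dlang P. sim n x u)
      \<and> nlet P \<le> F j n \<and> length P \<le> (j + 1) * nlet P + j)"
proof (induction j)
  case 0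
  show ?case
  proof (intro allI impI)
    fix u :: "'a list" and n assume "card (set u) \<le> 0"
    then have "u = []" by simp
    then show "\<exists>P. dproduct (set u) P \<and> u \<in> dlang P \<and> (\<forall>x\<in>dlang P. sim n x u)
      \<and> nlet P \<le> F 0 n \<and> length P \<le> (0 + 1) * nlet P + 0"
      by (intro exI[of _ "[]"]) (simp add: dproduct_def sim_refl)
  qed
next
  case (Suc j)
  show ?case
  proof (intro allI impI)
    fix u :: "'a list" and n assume cu: "card (set u) \<le> Suc j"
    show "\<exists>P. dproduct (set u) P \<and> u \<in> dlang P \<and> (\<forall>x\<in>dlang P. sim n x u)
      \<and> nlet P \<le> F (Suc j) n \<and> length P \<le> (Suc j + 1) * nlet P + Suc j"
    proof (cases "u = []")
      case True
      then show ?thesis by (intro exI[of _ "[]"]) (simp add: dproduct_def sim_refl)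
    next
      case False
      define B where "B = set u"
      have Bne: "B \<noteq> {}" and fB: "finite B" using False B_def by auto
      obtain T0 v where d: "length T0 \<le> n" "u = flat2 T0 @ v"
        "\<forall>(w, a)\<in>set T0. a \<in> B \<and> set w \<subseteq> B \<and> a \<notin> set w \<and> B \<subseteq> insert a (set w)"
        "length T0 < n \<longrightarrow> \<not> B \<subseteq> set v"
        using decomp[OF Bne, of n] B_def by blast
      define r where "r = length T0"
      define p where "p = n + 1 - r"
      have p1: "1 \<le> p" using d(1) r_def p_def by simp
      have vB: "set v \<subseteq> B" using d(2) B_def by auto
      define R where "R = (\<lambda>(w::'a list) Pw. dproduct (set w) Pw \<and> w \<in> dlang Pw \<and> (\<forall>x\<in>dlang Pw. sim p x w)
            \<and> nlet Pw \<le> F j p \<and> length Pw \<le> (j + 1) * nlet Pw + j)"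
      have arcs: "\<forall>(w, a)\<in>set T0. (a \<in> B \<and> set w \<subseteq> B \<and> a \<notin> set w \<and> B \<subseteq> insert a (set w))
           \<and> (\<exists>P. R w P)"
      proof (intro ballI, clarify)
        fix w a assume wa: "(w, a) \<in> set T0"
        then have h: "a \<in> B" "set w \<subseteq> B" "a \<notin> set w" "B \<subseteq> insert a (set w)" using d(3) by auto
        have "set w \<subseteq> B - {a}" using h by auto
        then have "card (set w) \<le> card (B - {a})" using fB by (intro card_mono) auto
        also have "\<dots> = card B - 1" using h(1) fB by simp
        finally have "card (set w) \<le> j" using cu B_def by simp
        then have "\<exists>P. R w P" using Suc.IH unfolding R_def by blast
        then show "(a \<in> B \<and> set w \<subseteq> B \<and> a \<notin> set w \<and> B \<subseteq> insert a (set w)) \<and> (\<exists>P. R w P)"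
          using h by blast
      qed
      obtain T where T: "flatT T = flat2 T0" "length T = length T0"
        "\<forall>(w, a, Pw)\<in>set T. (a \<in> B \<and> set w \<subseteq> B \<and> a \<notin> set w \<and> B \<subseteq> insert a (set w)) \<and> R w Pw"
        using lift[OF arcs] by blast
      obtain Q where Q: "dproduct (set v) Q" "v \<in> dlang Q" "\<forall>y\<in>dlang Q. sim (n - r) y v"
        "nlet Q \<le> F j (n - r)" "length Q \<le> (j + 1) * nlet Q + j + 1"
      proof (cases "r < n")
        case True
        then have "\<not> B \<subseteq> set v" using d(4) r_def by simp
        then have "set v \<subset> B" using vB by auto
        then have "card (set v) < card B" using fB by (simp add: psubset_card_mono)
        then have "card (set v) \<le> j" using cu B_def by simp
        then obtain Q where "dproduct (set v) Q" "v \<in> dlang Q" "\<forall>y\<in>dlang Q. sim (n - r) y v"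
          "nlet Q \<le> F j (n - r)" "length Q \<le> (j + 1) * nlet Q + j" using Suc.IH by blast
        then show ?thesis using that by simp
      next
        case False
        then have nr: "n - r = 0" by simp
        have "dproduct (set v) [Star (set v)]" by (simp add: dproduct_def)
        moreover have "v \<in> dlang [Star (set v)]" by (simp add: in_lists_conv_set)
        moreover have "\<forall>y\<in>dlang [Star (set v)]. sim (n - r) y v" by (simp add: nr sim_zero)
        moreover have "nlet [Star (set v)] \<le> F j (n - r)" by simp
        moreover have "length [Star (set v)] \<le> (j + 1) * nlet [Star (set v)] + j + 1" by simp
        ultimately show ?thesis using that by blast
      qed
      have QB: "dproduct B Q" using Q(1) vB dproduct_mono by blast
      have HT: "\<forall>(w, a, Pw)\<in>set T. w \<in> dlang Pw \<and> (\<forall>x\<in>dlang Pw. sim p x w) \<and> dproduct B Pw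
               \<and> a \<in> B \<and> set w \<subseteq> B \<and> B \<subseteq> insert a (set w)"
        using T(3) unfolding R_def by (auto intro: dproduct_mono)
      have n1: "n \<le> (n - r) + length T" "n + 1 \<le> p + length T" using T(2) r_def p_def d(1) by auto
      have M: "flatT T @ v \<in> dlang (PT T @ Q) \<and> dproduct B (PT T @ Q) \<and>
        (\<forall>x\<in>dlang (PT T @ Q). sim n x (flatT T @ v) \<and> set x \<subseteq> B \<and> univ B (length T) x)"
        using main_arcs[of v Q "n - r" B p T, OF Q(2) Q(3) vB QB p1] HT n1 by blast
      have ueq: "flatT T @ v = u" using T(1) d(2) by simp
      have cnt: "length (PT T) \<le> (j + 1) * nlet (PT T) \<and> nlet (PT T) \<le> length T * (F j p + 1)"
        by (rule count_PT) (use T(3) in \<open>auto simp: R_def\<close>)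
      have nl: "nlet (PT T @ Q) \<le> F (Suc j) n"
      proof -
        have "nlet (PT T @ Q) \<le> r * (F j p + 1) + F j (n - r)"
          using cnt Q(4) T(2) r_def by (simp add: nlet_append)
        also have "\<dots> = r * F j (n + 1 - r) + r + F j (n - r)" by (simp add: p_def algebra_simps)
        also have "\<dots> \<le> F (Suc j) n" using F_step d(1) r_def by blast
        finally show ?thesis .
      qed
      have ll: "length (PT T @ Q) \<le> (Suc j + 1) * nlet (PT T @ Q) + Suc j"
      proof -
        have "length (PT T @ Q) \<le> (j + 1) * nlet (PT T) + ((j + 1) * nlet Q + j + 1)"
          using cnt Q(5) by simp
        also have "\<dots> = (j + 1) * nlet (PT T @ Q) + Suc j" by (simp add: nlet_append algebra_simps)
        also have "\<dots> \<le> (Suc j + 1) * nlet (PT T @ Q) + Suc j" by simp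
        finally show ?thesis .
      qed
      show ?thesis
        by (rule exI[of _ "PT T @ Q"]) (use M ueq nl ll B_def in auto)
    qed
  qed
qed

theorem lemma19:
  fixes A :: "'a set" and L :: "'a list set" and n :: nat
  assumes "finite A" and "A \<noteq> {}" and "n_PT A n L"
  shows "\<forall>u\<in>L. \<exists>P. dproduct A P \<and>
           length P \<le> fseq (card A) n * card A + fseq (card A) n + card A \<and>
           u \<in> dlang P \<and> dlang P \<subseteq> L"
proof
  fix u assume uL: "u \<in> L"
  define k where "k = card A"
  have k1: "k \<noteq> 0" using assms(1,2) k_def by simp
  have LA: "L \<subseteq> lists A" using assms(3) unfolding n_PT_def by blast
  have uA: "set u \<subseteq> A" using uL LA by auto
  have "card (set u) \<le> k" using uA assms(1) k_def by (simp add: card_mono)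
  then obtain P where P: "dproduct (set u) P" "u \<in> dlang P" "\<forall>x\<in>dlang P. sim n x u"
      "nlet P \<le> F k n" "length P \<le> (k + 1) * nlet P + k"
    using mainP[of k] by blast
  have Fk: "F k n = fseq k n" using k1 by (simp add: F_def)
  have "(k + 1) * nlet P \<le> (k + 1) * fseq k n" using P(4) Fk by (intro mult_le_mono2) simp
  then have "length P \<le> (k + 1) * fseq k n + k" using P(5) by linarith
  then have len: "length P \<le> fseq k n * k + fseq k n + k" by (simp add: algebra_simps)
  have dA: "dproduct A P" using P(1) uA dproduct_mono by blast
  have "dlang P \<subseteq> L"
  proof
    fix x assume x: "x \<in> dlang P"
    have "set x \<subseteq> A" using dproduct_lists[OF dA x] .
    then have xA: "x \<in> lists A" by auto
    have "u \<in> lists A" using uA by auto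
    then show "x \<in> L" using assms(3) xA P(3) x uL unfolding n_PT_def by blast
  qed
  then show "\<exists>P. dproduct A P \<and>
           length P \<le> fseq (card A) n * card A + fseq (card A) n + card A \<and>
           u \<in> dlang P \<and> dlang P \<subseteq> L"
    using dA len P(2) k_def by blast
qed

end
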